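(* Let $c\in\{1,\dots,C\}$, $\widehat x_c\in\mathcal X$, $w\in\mathcal W$, $\widehat\theta_c\in\Theta$ and $\rho_c\ge0$. Then \[\sup_{\mathbb Q\in\mathbb B_{Y|\widehat x_c}}\mathbb E_{\mathbb Q}[\ell_\lambda(\widehat x_c,Y,w)]=\inf_{\gamma>0}\Big\{\gamma\big(\rho_c-\Psi(\widehat\theta_c)\big)+\gamma\,\Psi\big(\widehat\theta_c-\gamma^{-1}\lambda(w,\widehat x_c)\big)+\Psi\big(\lambda(w,\widehat x_c)\big)\Big\},\] and the function of $\gamma$ being minimized on the right is convex on $(0,\infty)$.
   Context: Exponential family: $\nu$ a measure on $\mathcal Y\subseteq\mathbb R^m$, $h\ge0$, $T:\mathcal Y\to\mathbb R^p$; $f(y|\theta)=h(y)\exp(\langle\theta,T(y)\rangle-\Psi(\theta))$ density w.r.t. $\nu$, $\Theta=\{\theta\in\mathbb R^p:\int he^{\langle\theta,T\rangle}d\nu<\infty\}$, $\Psi(\theta)=\log\int h e^{\langle\theta,T\rangle}d\nu$ (so $\Psi=+\infty$ outside $\Theta$); the family is regular ($\Theta$ open, $T_1,\dots,T_p$ affinely independent). $\mathcal X\subseteq\mathbb R^n$, $\mathcal W$ a finite-dimensional set, $\lambda:\mathcal W\times\mathcal X\to\Theta$ jointly continuous. Log-loss: $\ell_\lambda(x,y,w)=\Psi(\lambda(w,x))-\langle T(y),\lambda(w,x)\rangle$. KL divergence $\mathrm{KL}(\mathbb P_1\|\mathbb P_2)=\mathbb E_{\mathbb P_1}[\log d\mathbb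 P_1/d\mathbb P_2]$. Conditional ambiguity set: $\mathbb B_{Y|\widehat x_c}$ is the set of distributions on $\mathcal Y$ with density $f(\cdot|\theta)$ for some $\theta\in\Theta$ with $\mathrm{KL}(f(\cdot|\theta)\|f(\cdot|\widehat\theta_c))\le\rho_c$. *)

theory Defs
  imports "HOL-Probability.Probability"
begin

definition expfam_Theta :: "'y measure \<Rightarrow> ('y \<Rightarrow> real) \<Rightarrow> ('y \<Rightarrow> 'p::real_inner) \<Rightarrow> 'p set" where
  "expfam_Theta nu h T =
     {\<theta>. (\<integral>\<^sup>+ y. ennreal (h y * exp (inner \<theta> (T y))) \<partial>nu) < \<infinity>}"

definition expfam_Psi :: "'y measure \<Rightarrow> ('y \<Rightarrow> real) \<Rightarrow> ('y \<Rightarrow> 'p::real_inner) \<Rightarrow> 'p \<Rightarrow> ereal" where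
  "expfam_Psi nu h T \<theta> =
     (if \<theta> \<in> expfam_Theta nu h T
      then ereal (ln (enn2real (\<integral>\<^sup>+ y. ennreal (h y * exp (inner \<theta> (T y))) \<partial>nu)))
      else \<infinity>)"

definition expfam_density :: "'y measure \<Rightarrow> ('y \<Rightarrow> real) \<Rightarrow> ('y \<Rightarrow> 'p::real_inner) \<Rightarrow> 'p \<Rightarrow> 'y \<Rightarrow> real" where
  "expfam_density nu h T \<theta> y =
     h y * exp (inner \<theta> (T y) - real_of_ereal (expfam_Psi nu h T \<theta>))"

definition expfam_dist :: "'y measure \<Rightarrow> ('y \<Rightarrow> real) \<Rightarrow> ('y \<Rightarrow> 'p::real_inner) \<Rightarrow> 'p \<Rightarrow> 'y measure" where
  "expfam_dist nu h T \<theta> = density nu (\<lambda>y. ennreal (expfam_density nu h T \<theta> y))"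

text \<open>Regular family: Theta open and T_1,...,T_p affinely independent, i.e. no nontrivial
  affine relation <a,T(y)> = b holds almost everywhere w.r.t. the base measure h nu.\<close>
definition expfam_regular :: "'y measure \<Rightarrow> ('y \<Rightarrow> real) \<Rightarrow> ('y \<Rightarrow> 'p::real_inner) \<Rightarrow> bool" where
  "expfam_regular nu h T \<longleftrightarrow>
     open (expfam_Theta nu h T) \<and>
     (\<forall>a b. (AE y in density nu (\<lambda>y. ennreal (h y)). inner a (T y) = b) \<longrightarrow> a = 0)"

definition expfam_logloss :: "'y measure \<Rightarrow> ('y \<Rightarrow> real) \<Rightarrow> ('y \<Rightarrow> 'p::real_inner)
    \<Rightarrow> ('w \<Rightarrow> 'x \<Rightarrow> 'p) \<Rightarrow> 'x \<Rightarrow> 'y \<Rightarrow> 'w \<Rightarrow> real" where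
  "expfam_logloss nu h T lam x y w =
     real_of_ereal (expfam_Psi nu h T (lam w x)) - inner (T y) (lam w x)"

text \<open>KL(P1 || P2) = E_P1[log dP1/dP2] (natural log); the library's KL_divergence b M N
  is the divergence of N from M.\<close>
definition KL :: "'y measure \<Rightarrow> 'y measure \<Rightarrow> real" where
  "KL P1 P2 = KL_divergence (exp 1) P2 P1"

definition cond_ambiguity_set :: "'y measure \<Rightarrow> ('y \<Rightarrow> real) \<Rightarrow> ('y \<Rightarrow> 'p::real_inner)
    \<Rightarrow> 'p \<Rightarrow> real \<Rightarrow> 'y measure set" where
  "cond_ambiguity_set nu h T thetahat rho =
     {expfam_dist nu h T \<theta> | \<theta>. \<theta> \<in> expfam_Theta nu h T \<and>
        KL (expfam_dist nu h T \<theta>) (expfam_dist nu h T thetahat) \<le> rho}"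

definition convex_on_ereal :: "real set \<Rightarrow> (real \<Rightarrow> ereal) \<Rightarrow> bool" where
  "convex_on_ereal S f \<longleftrightarrow> convex S \<and>
     (\<forall>x\<in>S. \<forall>y\<in>S. \<forall>t\<in>{0..1}.
        f ((1 - t) * x + t * y) \<le> ereal (1 - t) * f x + ereal t * f y)"

end

theory Submission
  imports Defs "HOL-Real_Asymp.Real_Asymp"
begin


lemma oneD_bound:
  fixes K m :: "real \<Rightarrow> real"
  assumes K0: "K 0 = 0" and sub: "\<And>s t. s\<in>R \<Longrightarrow> t\<in>R \<Longrightarrow> K t + (s - t) * m t \<le> K s"
    and t0: "t0 \<in> R" "0 < t0" and t: "t \<in> R" "0 \<le> t" and ts: "t \<le> ts" "t0 \<le> ts"
    and F: "t * m t - K t \<le> \<rho>" and rho: "0 \<le> \<rho>" and R0: "0 \<in> R"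
  shows "K t \<le> \<bar>K t0\<bar> + ts * (\<bar>K t0\<bar> + \<rho>) / t0"
proof -
  have nn: "0 \<le> ts * (\<bar>K t0\<bar> + \<rho>) / t0"
    using t0 ts t rho by (intro divide_nonneg_pos mult_nonneg_nonneg add_nonneg_nonneg) auto
  have b: "K t + (t0 - t) * m t \<le> K t0" using sub[OF t0(1) t(1)] .
  show ?thesis
  proof (cases "t \<le> t0")
    case True
    have a: "K t + (0 - t) * m t \<le> 0" using sub[OF R0 t(1)] K0 by simp
    have "(t0 - t) * (K t - t * m t) \<le> (t0 - t) * 0"
      using a True by (intro mult_left_mono) auto
    moreover have "t * (K t + (t0 - t) * m t) \<le> t * K t0"
      using b t(2) by (rule mult_left_mono)
    ultimately have "(t0 - t) * (K t - t * m t) + t * (K t + (t0 - t) * m t) \<le> (t0 - t) * 0 + t * K t0"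
      by (rule add_mono)
    moreover have "(t0 - t) * (K t - t * m t) + t * (K t + (t0 - t) * m t) = t0 * K t"
      by (simp add: algebra_simps)
    ultimately have c0: "t0 * K t \<le> t * K t0" by simp
    have c1: "t * K t0 \<le> t * \<bar>K t0\<bar>" using abs_ge_self t(2) by (rule mult_left_mono)
    have c2: "t * \<bar>K t0\<bar> \<le> t0 * \<bar>K t0\<bar>" using True abs_ge_zero by (rule mult_right_mono)
    have "t0 * K t \<le> t0 * \<bar>K t0\<bar>" using c0 c1 c2 by linarith
    then have "K t \<le> \<bar>K t0\<bar>" using mult_le_cancel_left_pos[OF t0(2)] by blast
    then show ?thesis using nn by linarith
  next
    case False
    have i1: "t * (K t + (t0 - t) * m t) \<le> t * K t0"
      using b t(2) by (rule mult_left_mono)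
    have e1: "t * (K t + (t0 - t) * m t) = t * K t - (t - t0) * (t * m t)"
      by (simp add: algebra_simps)
    have i2: "(t - t0) * (t * m t) \<le> (t - t0) * (\<rho> + K t)"
      using F False by (intro mult_left_mono) auto
    have e2: "(t - t0) * (\<rho> + K t) = (t - t0) * \<rho> + t * K t - t0 * K t"
      by (simp add: algebra_simps)
    have c0: "t0 * K t \<le> t * K t0 + (t - t0) * \<rho>"
      using i1 i2 unfolding e1 e2 by linarith
    have c1: "t * K t0 \<le> ts * \<bar>K t0\<bar>"
    proof -
      have "t * K t0 \<le> t * \<bar>K t0\<bar>" using abs_ge_self t(2) by (rule mult_left_mono)
      also have "\<dots> \<le> ts * \<bar>K t0\<bar>" using ts(1) abs_ge_zero by (rule mult_right_mono)
      finally show ?thesis .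
    qed
    have c2: "(t - t0) * \<rho> \<le> ts * \<rho>" using rho ts t0 by (intro mult_right_mono) auto
    have "t0 * K t \<le> ts * (\<bar>K t0\<bar> + \<rho>)" using c0 c1 c2 by (simp add: distrib_left)
    then have "K t \<le> ts * (\<bar>K t0\<bar> + \<rho>) / t0" using t0(2)
      by (simp add: pos_le_divide_eq mult.commute)
    then show ?thesis using nn by linarith
  qed
qed

lemma oneD:
  fixes K m :: "real \<Rightarrow> real" and R :: "real set" and \<rho> p :: real and c c' :: ereal
  assumes Ropen: "open R" and Rconv: "convex R" and R0: "0 \<in> R"
   and K0: "K 0 = 0"
   and sub: "\<And>s t. s\<in>R \<Longrightarrow> t\<in>R \<Longrightarrow> K t + (s - t) * m t \<le> K s"
   and contm: "continuous_on R m" and contK: "continuous_on R K"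
   and clos: "\<And>t' B. 0 < t' \<Longrightarrow> (\<And>t. 0 \<le> t \<Longrightarrow> t < t' \<Longrightarrow> t \<in> R \<and> K t \<le> B) \<Longrightarrow> t' \<in> R"
   and rho: "0 \<le> \<rho>"
   and up: "\<And>t. t\<in>R \<Longrightarrow> 0 \<le> t \<Longrightarrow> t * m t - K t \<le> \<rho> \<Longrightarrow> ereal (p + m t) \<le> c"
   and low: "\<And>\<gamma>. 0 < \<gamma> \<Longrightarrow> 1/\<gamma> \<in> R \<Longrightarrow> c' \<le> ereal (\<gamma> * \<rho> + \<gamma> * K (1/\<gamma>) + p)"
  shows "c' \<le> c"
proof -
  have low': "c' \<le> ereal (\<rho>/s + m s + p)" if s: "s \<in> R" "0 < s" for s
  proof -
    have "K s + (0 - s) * m s \<le> 0" using sub[OF R0 s(1)] K0 by simp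
    then have "K s \<le> s * m s" by simp
    then have "(1/s) * \<rho> + (1/s) * K (1/(1/s)) + p \<le> \<rho>/s + m s + p"
      using s(2) by (simp add: field_simps)
    moreover have "c' \<le> ereal ((1/s) * \<rho> + (1/s) * K (1/(1/s)) + p)"
      using low[of "1/s"] s by simp
    ultimately show ?thesis by (meson ereal_less_eq(3) order_trans)
  qed
  have m0c: "ereal (p + m 0) \<le> c" using up[OF R0] K0 rho by simp
  obtain d where d: "d > 0" "ball 0 d \<subseteq> R" using Ropen R0 open_contains_ball by blast
  have isc: "isCont m t" if "t \<in> R" for t
    using contm Ropen that continuous_on_eq_continuous_at by blast
  have iscK: "isCont K t" if "t \<in> R" for t
    using contK Ropen that continuous_on_eq_continuous_at by blast
  show ?thesis
  proof (cases "\<rho> = 0")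
    case True
    have ev: "eventually (\<lambda>s. c' \<le> ereal (m s + p)) (at_right 0)"
    proof -
      have "eventually (\<lambda>s. s \<in> ball 0 d \<and> s > 0) (at_right (0::real))"
        using d(1) by (auto simp: eventually_at_right_field dist_real_def intro!: exI[of _ d])
      then have "eventually (\<lambda>s. s \<in> R \<and> s > 0) (at_right (0::real))"
        by eventually_elim (use d in auto)
      then show ?thesis
        by eventually_elim (use low' d True in auto)
    qed
    have lim: "((\<lambda>s. ereal (m s + p)) \<longlongrightarrow> ereal (m 0 + p)) (at_right 0)"
      using isc[OF R0]
      by (intro tendsto_intros) (auto simp: isCont_def filterlim_at_split)
    have "c' \<le> ereal (m 0 + p)"
      using tendsto_le[OF _ lim tendsto_const ev] by simp
    then show ?thesis using m0c by (simp add: add.commute)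
  next
    case False
    then have rpos: "\<rho> > 0" using rho by simp
    show ?thesis
    proof (cases "\<exists>t'\<in>R. 0 \<le> t' \<and> \<rho> < t' * m t' - K t'")
      case True
      then obtain t' where t': "t' \<in> R" "0 \<le> t'" "\<rho> < t' * m t' - K t'" by blast
      have seg: "{0..t'} \<subseteq> R"
        using Rconv R0 t'(1) t'(2) by (simp add: convex_contains_segment closed_segment_eq_real_ivl, metis)
      have "continuous_on {0..t'} (\<lambda>t. t * m t - K t)"
        using seg by (intro continuous_at_imp_continuous_on ballI continuous_intros isc iscK) auto
      then obtain t where t: "0 \<le> t" "t \<le> t'" "t * m t - K t = \<rho>"
        using IVT'[of "\<lambda>t. t * m t - K t" 0 \<rho> t'] t' K0 rpos by auto
      have tR: "t \<in> R" using seg t by auto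
      have tpos: "t > 0" using t rpos K0 by (cases "t = 0") auto
      have "c' \<le> ereal ((1/t) * \<rho> + (1/t) * K (1/(1/t)) + p)"
        using low[of "1/t"] tR tpos by simp
      also have "(1/t) * \<rho> + (1/t) * K (1/(1/t)) + p = m t + p"
        using t(3) tpos by (simp add: field_simps)
      also have "ereal (m t + p) \<le> c" using up[OF tR t(1)] t(3) by (simp add: add.commute)
      finally show ?thesis .
    next
      case False
      then have allF: "t \<in> R \<Longrightarrow> 0 \<le> t \<Longrightarrow> ereal (p + m t) \<le> c" for t
        using up by (meson not_le)
      have allR: "t \<in> R" if "0 \<le> t" for t
      proof (rule ccontr)
        assume "t \<notin> R"
        define S where "S = {t. 0 \<le> t \<and> t \<notin> R}"
        have Sne: "S \<noteq> {}" using \<open>t \<notin> R\<close> that S_def by auto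
        have Sbdd: "bdd_below S" unfolding S_def by (auto intro: bdd_belowI[of _ 0])
        have Scl: "closed S"
        proof -
          have "S = {0..} \<inter> (- R)" unfolding S_def by auto
          then show ?thesis using Ropen by (auto intro!: closed_Int)
        qed
        define ts where "ts = Inf S"
        have tsS: "ts \<in> S" unfolding ts_def using Sne Sbdd Scl by (rule closed_contains_Inf)
        have ts0: "ts > 0" using tsS R0 unfolding S_def by (cases "ts = 0") auto
        have below: "u \<in> R" if "0 \<le> u" "u < ts" for u
        proof (rule ccontr)
          assume "u \<notin> R" then have "u \<in> S" using that S_def by auto
          then have "ts \<le> u" unfolding ts_def using Sbdd by (rule cInf_lower)
          then show False using that by simp
        qed
        define t0 where "t0 = ts / 2"
        have t0: "t0 \<in> R" "0 < t0" "t0 \<le> ts" using ts0 below unfolding t0_def by auto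
        have "ts \<in> R"
        proof (rule clos[OF ts0])
          fix u assume u: "0 \<le> u" "u < ts"
          have uR: "u \<in> R" using below u by auto
          have "\<not> \<rho> < u * m u - K u" using False uR u by auto
          then show "u \<in> R \<and> K u \<le> \<bar>K t0\<bar> + ts * (\<bar>K t0\<bar> + \<rho>) / t0"
            using oneD_bound[OF K0 sub t0(1,2) uR u(1) _ t0(3), of \<rho>] u rho R0 uR by auto
        qed
        then show False using tsS S_def by auto
      qed
      show ?thesis
      proof (cases c)
        case (real C)
        have cl: "c' \<le> ereal (\<rho>/s + C)" if "s > 0" for s
        proof -
          have "c' \<le> ereal (\<rho>/s + m s + p)" using low' allR that by auto
          also have "p + m s \<le> C" using allF[OF allR] that real by auto
          then have "ereal (\<rho>/s + m s + p) \<le> ereal (\<rho>/s + C)" by simp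
          finally show ?thesis .
        qed
        show ?thesis
        proof (cases c')
          case (real C')
          have "C' \<le> C"
          proof (rule ccontr)
            assume "\<not> C' \<le> C"
            then have pos: "C' - C > 0" by simp
            define s where "s = 2 * \<rho> / (C' - C)"
            have s: "s > 0" using pos rpos s_def by auto
            have "C' \<le> \<rho>/s + C" using cl[OF s] real by simp
            also have "\<rho>/s = (C' - C)/2" using rpos pos unfolding s_def by (simp add: field_simps)
            finally have "C' \<le> (C' - C)/2 + C" .
            then show False using pos by (simp add: field_simps)
          qed
          then show ?thesis using real \<open>c = ereal C\<close> by simp
        next
          case PInf
          then show ?thesis using cl[of 1] by simp
        qed simp
      next
        case PInf then show ?thesis by simp
      next
        case MInf then show ?thesis using m0c by simp
      qed
    qed
  qed
qed

lemma isCont_integral_dom: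
  fixes s :: "real \<Rightarrow> 'a \<Rightarrow> real"
  assumes e: "e > 0" and meas: "\<And>t. s t \<in> borel_measurable M" and w: "integrable M w"
    and bnd: "\<And>t x. \<bar>t - t0\<bar> < e \<Longrightarrow> x \<in> space M \<Longrightarrow> \<bar>s t x\<bar> \<le> w x"
    and cont: "\<And>x. x \<in> space M \<Longrightarrow> isCont (\<lambda>t. s t x) t0"
  shows "isCont (\<lambda>t. integral\<^sup>L M (s t)) t0"
proof (rule continuous_at_sequentiallyI)
  fix X :: "nat \<Rightarrow> real" assume X: "X \<longlonglongrightarrow> t0"
  then obtain N where N: "\<And>n. n \<ge> N \<Longrightarrow> \<bar>X n - t0\<bar> < e"
    using e unfolding LIMSEQ_iff by (metis real_norm_def)
  have "(\<lambda>n. integral\<^sup>L M (s (X (n + N)))) \<longlonglongrightarrow> integral\<^sup>L M (s t0)"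
  proof (rule integral_dominated_convergence[where w=w])
    show "s t0 \<in> borel_measurable M" "\<And>n. s (X (n + N)) \<in> borel_measurable M" by (rule meas)+
    show "integrable M w" by (rule w)
    show "AE x in M. (\<lambda>n. s (X (n + N)) x) \<longlonglongrightarrow> s t0 x"
    proof (rule AE_I2)
      fix x assume x: "x \<in> space M"
      have "(\<lambda>n. X (n + N)) \<longlonglongrightarrow> t0" using X by (rule LIMSEQ_ignore_initial_segment)
      then show "(\<lambda>n. s (X (n + N)) x) \<longlonglongrightarrow> s t0 x"
        by (rule isCont_tendsto_compose[OF cont[OF x]])
    qed
    show "AE x in M. norm (s (X (n + N)) x) \<le> w x" for n
      using bnd N by (intro AE_I2) auto
  qed
  then show "(\<lambda>n. integral\<^sup>L M (s (X n))) \<longlonglongrightarrow> integral\<^sup>L M (s t0)"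
    by (rule LIMSEQ_offset)
qed



context
  fixes nu :: "'y::euclidean_space measure"
    and h :: "'y \<Rightarrow> real"
    and T :: "'y \<Rightarrow> 'p::euclidean_space"
  assumes h_meas[measurable]: "h \<in> borel_measurable nu"
    and h_nonneg: "\<forall>y\<in>space nu. 0 \<le> h y"
    and T_meas[measurable]: "T \<in> borel_measurable nu"
    and regular: "expfam_regular nu h T"
begin

definition "Zf \<theta> = (\<integral>y. h y * exp (inner \<theta> (T y)) \<partial>nu)"

lemma meas_b[measurable]: "(\<lambda>y. h y * exp (inner \<theta> (T y))) \<in> borel_measurable nu"
  by measurable

lemma Theta_iff: "\<theta> \<in> expfam_Theta nu h T \<longleftrightarrow> integrable nu (\<lambda>y. h y * exp (inner \<theta> (T y)))"
proof -
  have "(\<integral>\<^sup>+ y. ennreal (h y * exp (inner \<theta> (T y))) \<partial>nu) = (\<integral>\<^sup>+ y. ennreal (norm (h y * exp (inner \<theta> (T y)))) \<partial>nu)"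
    using h_nonneg by (intro nn_integral_cong) auto
  then show ?thesis unfolding expfam_Theta_def integrable_iff_bounded by auto
qed

lemma Z_nonneg: "0 \<le> Zf \<theta>"
  unfolding Zf_def using h_nonneg by (auto intro!: integral_nonneg_AE AE_I2)

lemma Psi_eq: "\<theta> \<in> expfam_Theta nu h T \<Longrightarrow> expfam_Psi nu h T \<theta> = ereal (ln (Zf \<theta>))"
proof -
  assume th: "\<theta> \<in> expfam_Theta nu h T"
  then have "(\<integral>\<^sup>+ y. ennreal (h y * exp (inner \<theta> (T y))) \<partial>nu) = ennreal (Zf \<theta>)"
    unfolding Zf_def using h_nonneg by (intro nn_integral_eq_integral) (auto simp: Theta_iff)
  then show ?thesis using th Z_nonneg unfolding expfam_Psi_def by simp
qed

lemma Z_pos: "\<theta> \<in> expfam_Theta nu h T \<Longrightarrow> 0 < Zf \<theta>"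
proof (rule ccontr)
  assume th: "\<theta> \<in> expfam_Theta nu h T" and "\<not> 0 < Zf \<theta>"
  then have "Zf \<theta> = 0" using Z_nonneg[of \<theta>] by auto
  then have "AE y in nu. h y * exp (inner \<theta> (T y)) = 0"
    using th h_nonneg unfolding Zf_def Theta_iff
    by (subst integral_nonneg_eq_0_iff_AE[symmetric]) auto
  then have ae: "AE y in nu. h y = 0" by auto
  obtain a :: 'p where a: "a \<in> Basis" using nonempty_Basis by blast
  have "AE y in density nu (\<lambda>y. ennreal (h y)). inner a (T y) = 0"
    using ae by (subst AE_density) (auto elim: AE_mp)
  then have "a = 0" using regular unfolding expfam_regular_def by blast
  then show False using a nonzero_Basis by blast
qed


lemma open_Theta: "open (expfam_Theta nu h T)"
  using regular unfolding expfam_regular_def by blast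

lemma abs_le_exps: "0 < e \<Longrightarrow> \<bar>x::real\<bar> \<le> (exp (e*x) + exp (-(e*x))) / e"
proof -
  assume e: "0 < e"
  have "e * \<bar>x\<bar> \<le> exp (e*x) + exp (-(e*x))"
  proof (cases "0 \<le> x")
    case True
    then have "e*\<bar>x\<bar> = e*x" by simp
    also have "\<dots> \<le> exp (e*x)" using exp_ge_add_one_self[of "e*x"] by linarith
    finally show ?thesis by (smt (verit) exp_gt_zero)
  next
    case False
    then have "e*\<bar>x\<bar> = -(e*x)" by simp
    also have "\<dots> \<le> exp (-(e*x))" using exp_ge_add_one_self[of "-(e*x)"] by linarith
    finally show ?thesis by (smt (verit) exp_gt_zero)
  qed
  then show ?thesis using e by (simp add: field_simps)
qed

lemma integrable_lin:
  assumes th: "\<theta> \<in> expfam_Theta nu h T"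
  shows "integrable nu (\<lambda>y. h y * exp (inner \<theta> (T y)) * inner d (T y))"
proof -
  obtain r where r: "r > 0" "ball \<theta> r \<subseteq> expfam_Theta nu h T"
    using open_Theta th open_contains_ball by blast
  define e where "e = r / (2 * (norm d + 1))"
  have nd: "2 * (norm d + 1) > 0" by (smt (verit) norm_ge_zero)
  have e: "e > 0" using r unfolding e_def by (intro divide_pos_pos) (auto, smt (verit) norm_ge_zero)
  have "norm (e *\<^sub>R d) < r"
  proof -
    have "norm (e *\<^sub>R d) = e * norm d" using e by simp
    also have "\<dots> < e * (2*(norm d + 1))" using e norm_ge_zero[of d] by (smt (verit) mult_strict_left_mono)
    also have "\<dots> = r" unfolding e_def using nd by simp
    finally show ?thesis .
  qed
  then have p: "\<theta> + e *\<^sub>R d \<in> expfam_Theta nu h T" and m: "\<theta> - e *\<^sub>R d \<in> expfam_Theta nu h T"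
    using r by (auto simp: dist_norm intro!: subsetD[OF r(2)])
  have int: "integrable nu (\<lambda>y. (h y * exp (inner (\<theta> + e *\<^sub>R d) (T y)) + h y * exp (inner (\<theta> - e *\<^sub>R d) (T y))) / e)"
    using p m by (auto simp: Theta_iff)
  show ?thesis
  proof (rule Bochner_Integration.integrable_bound[OF int])
    show "AE y in nu. norm (h y * exp (inner \<theta> (T y)) * inner d (T y))
       \<le> norm ((h y * exp (inner (\<theta> + e *\<^sub>R d) (T y)) + h y * exp (inner (\<theta> - e *\<^sub>R d) (T y))) / e)"
    proof (rule AE_I2)
      fix y assume y: "y \<in> space nu"
      let ?x = "inner d (T y)" and ?a = "inner \<theta> (T y)"
      have hy: "0 \<le> h y" using y h_nonneg by auto
      have "norm (h y * exp ?a * ?x) = h y * exp ?a * \<bar>?x\<bar>" using hy by (simp add: abs_mult)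
      also have "\<dots> \<le> h y * exp ?a * ((exp (e*?x) + exp (-(e*?x))) / e)"
        using hy abs_le_exps[OF e, of ?x] by (intro mult_left_mono) auto
      also have "\<dots> = (h y * exp (inner (\<theta> + e *\<^sub>R d) (T y)) + h y * exp (inner (\<theta> - e *\<^sub>R d) (T y))) / e"
        by (simp add: inner_add_left inner_diff_left exp_add exp_diff field_simps exp_minus)
      also have "\<dots> \<le> norm \<dots>" unfolding real_norm_def by (rule abs_ge_self)
      finally show "norm (h y * exp ?a * ?x) \<le> norm ((h y * exp (inner (\<theta> + e *\<^sub>R d) (T y)) + h y * exp (inner (\<theta> - e *\<^sub>R d) (T y))) / e)" .
    qed
  qed measurable
qed


definition "Ef \<theta> d = (\<integral>y. h y * exp (inner \<theta> (T y)) * inner d (T y) \<partial>nu) / Zf \<theta>"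

lemma int_b: "\<theta> \<in> expfam_Theta nu h T \<Longrightarrow> integrable nu (\<lambda>y. h y * exp (inner \<theta> (T y)))"
  by (simp add: Theta_iff)

lemma dens_eq: "\<theta> \<in> expfam_Theta nu h T \<Longrightarrow>
   expfam_density nu h T \<theta> y = h y * exp (inner \<theta> (T y)) / Zf \<theta>"
  unfolding expfam_density_def using Z_pos[of \<theta>] by (simp add: Psi_eq exp_diff)

lemma dens_meas[measurable]: "(\<lambda>y. expfam_density nu h T \<theta> y) \<in> borel_measurable nu"
  unfolding expfam_density_def by measurable

lemma dens_nonneg: "y \<in> space nu \<Longrightarrow> 0 \<le> expfam_density nu h T \<theta> y"
  unfolding expfam_density_def using h_nonneg by auto

lemma int_dist:
  assumes th: "\<theta> \<in> expfam_Theta nu h T" and phi[measurable]: "\<phi> \<in> borel_measurable nu"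
  shows "(\<integral>y. \<phi> y \<partial>expfam_dist nu h T \<theta>) = (\<integral>y. h y * exp (inner \<theta> (T y)) * \<phi> y \<partial>nu) / Zf \<theta>"
proof -
  have "(\<integral>y. \<phi> y \<partial>expfam_dist nu h T \<theta>) = (\<integral>y. expfam_density nu h T \<theta> y * \<phi> y \<partial>nu)"
    unfolding expfam_dist_def using dens_nonneg by (subst integral_density) auto
  also have "\<dots> = (\<integral>y. (h y * exp (inner \<theta> (T y)) * \<phi> y) / Zf \<theta> \<partial>nu)"
    using th by (simp add: dens_eq)
  also have "\<dots> = (\<integral>y. h y * exp (inner \<theta> (T y)) * \<phi> y \<partial>nu) / Zf \<theta>"
    by (rule integral_divide_zero)
  finally show ?thesis .
qed

lemma Ef_add: "\<theta> \<in> expfam_Theta nu h T \<Longrightarrow> Ef \<theta> (a + b) = Ef \<theta> a + Ef \<theta> b"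
  unfolding Ef_def
  by (simp add: inner_add_left distrib_left integrable_lin add_divide_distrib)

lemma Ef_scale: "Ef \<theta> (c *\<^sub>R a) = c * Ef \<theta> a"
  unfolding Ef_def by (simp add: mult.left_commute)

lemma Ef_minus: "Ef \<theta> (- a) = - Ef \<theta> a"
  using Ef_scale[of \<theta> "-1" a] by simp

lemma Ef_diff: "\<theta> \<in> expfam_Theta nu h T \<Longrightarrow> Ef \<theta> (a - b) = Ef \<theta> a - Ef \<theta> b"
  using Ef_add[of \<theta> a "-b"] Ef_minus[of \<theta> b] by simp

lemma int_dist_const_lin:
  assumes th: "\<theta> \<in> expfam_Theta nu h T"
  shows "(\<integral>y. c + inner d (T y) \<partial>expfam_dist nu h T \<theta>) = c + Ef \<theta> d"
proof -
  have "(\<integral>y. c + inner d (T y) \<partial>expfam_dist nu h T \<theta>)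
     = (\<integral>y. c * (h y * exp (inner \<theta> (T y))) + h y * exp (inner \<theta> (T y)) * inner d (T y) \<partial>nu) / Zf \<theta>"
    using th by (subst int_dist) (auto simp: algebra_simps)
  also have "\<dots> = (c * Zf \<theta> + Zf \<theta> * Ef \<theta> d) / Zf \<theta>"
    using th Z_pos[OF th] unfolding Ef_def Zf_def by (simp add: integrable_lin int_b)
  also have "\<dots> = c + Ef \<theta> d" using Z_pos[OF th] by (simp add: field_simps)
  finally show ?thesis .
qed

lemma support:
  assumes th: "\<theta> \<in> expfam_Theta nu h T" and th': "\<theta>' \<in> expfam_Theta nu h T"
  shows "ln (Zf \<theta>) + Ef \<theta> (\<theta>' - \<theta>) \<le> ln (Zf \<theta>')"
proof -
  define E where "E = Ef \<theta> (\<theta>' - \<theta>)"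
  have "(\<integral>y. exp E * (h y * exp (inner \<theta> (T y))) + exp E * (h y * exp (inner \<theta> (T y)) * inner (\<theta>' - \<theta>) (T y))
          - exp E * E * (h y * exp (inner \<theta> (T y))) \<partial>nu) \<le> Zf \<theta>'"
    unfolding Zf_def
  proof (rule integral_mono)
    show "integrable nu (\<lambda>y. exp E * (h y * exp (inner \<theta> (T y))) + exp E * (h y * exp (inner \<theta> (T y)) * inner (\<theta>' - \<theta>) (T y))
          - exp E * E * (h y * exp (inner \<theta> (T y))))"
      using th by (intro Bochner_Integration.integrable_diff Bochner_Integration.integrable_add integrable_mult_right integrable_lin int_b)
    show "integrable nu (\<lambda>y. h y * exp (inner \<theta>' (T y)))" using th' by (rule int_b)
    fix y assume y: "y \<in> space nu"
    let ?x = "inner (\<theta>' - \<theta>) (T y)"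
    have hy: "0 \<le> h y" using y h_nonneg by auto
    have "exp E * (1 + (?x - E)) \<le> exp E * exp (?x - E)"
      by (intro mult_left_mono exp_ge_add_one_self) auto
    also have "\<dots> = exp ?x" by (simp add: exp_diff)
    finally have "exp E * (1 + ?x - E) \<le> exp ?x" by (simp add: add_diff_eq)
    then have "h y * exp (inner \<theta> (T y)) * (exp E * (1 + ?x - E)) \<le> h y * exp (inner \<theta> (T y)) * exp ?x"
      using hy by (intro mult_left_mono) auto
    also have "\<dots> = h y * exp (inner \<theta>' (T y))"
      by (simp add: inner_diff_left exp_diff)
    finally show "exp E * (h y * exp (inner \<theta> (T y))) + exp E * (h y * exp (inner \<theta> (T y)) * ?x)
          - exp E * E * (h y * exp (inner \<theta> (T y))) \<le> h y * exp (inner \<theta>' (T y))"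
      by (simp add: algebra_simps)
  qed
  also have "(\<integral>y. exp E * (h y * exp (inner \<theta> (T y))) + exp E * (h y * exp (inner \<theta> (T y)) * inner (\<theta>' - \<theta>) (T y))
          - exp E * E * (h y * exp (inner \<theta> (T y))) \<partial>nu)
     = exp E * Zf \<theta> + exp E * (Zf \<theta> * E) - exp E * E * Zf \<theta>"
    using th Z_pos[OF th] unfolding E_def Ef_def Zf_def by (simp add: integrable_lin int_b)
  finally have "exp E * Zf \<theta> \<le> Zf \<theta>'" by (simp add: algebra_simps)
  then have "ln (exp E * Zf \<theta>) \<le> ln (Zf \<theta>')"
    using Z_pos[OF th] Z_pos[OF th'] by (subst ln_le_cancel_iff) auto
  then show ?thesis using Z_pos[OF th] by (simp add: ln_mult E_def)
qed


lemma KL_eq: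
  assumes th: "\<theta> \<in> expfam_Theta nu h T" and th0: "\<theta>0 \<in> expfam_Theta nu h T"
  shows "KL (expfam_dist nu h T \<theta>) (expfam_dist nu h T \<theta>0)
       = Ef \<theta> (\<theta> - \<theta>0) - ln (Zf \<theta>) + ln (Zf \<theta>0)"
proof -
  define f where "f = expfam_density nu h T \<theta>0"
  define g where "g = expfam_density nu h T \<theta>"
  have [measurable]: "f \<in> borel_measurable nu" "g \<in> borel_measurable nu"
    unfolding f_def g_def by measurable
  have fnn: "AE x in nu. 0 \<le> f x" and gnn: "AE x in nu. 0 \<le> g x"
    unfolding f_def g_def using dens_nonneg by auto
  have ac: "AE x in nu. f x = 0 \<longrightarrow> g x = 0"
    unfolding f_def g_def using Z_pos[OF th] Z_pos[OF th0] by (auto simp: dens_eq[OF th] dens_eq[OF th0])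
  have "f = (\<lambda>y. h y * exp (inner \<theta>0 (T y)) / Zf \<theta>0)"
    unfolding f_def by (rule ext) (simp add: dens_eq[OF th0])
  then have fint: "integrable nu f"
    using int_b[OF th0] by (metis integrable_divide_zero)
  have "finite_measure (density nu f)"
  proof
    have "emeasure (density nu f) (space (density nu f)) = (\<integral>\<^sup>+ x. ennreal (f x) \<partial>nu)"
      by (subst emeasure_density) (auto intro!: nn_integral_cong)
    also have "\<dots> = ennreal (\<integral>x. f x \<partial>nu)"
      using fint fnn by (rule nn_integral_eq_integral)
    finally show "emeasure (density nu f) (space (density nu f)) \<noteq> \<infinity>" by simp
  qed
  then interpret F: finite_measure "density nu f" .
  have "KL (expfam_dist nu h T \<theta>) (expfam_dist nu h T \<theta>0)
      = KL_divergence (exp 1) (density nu f) (density (density nu f) (\<lambda>x. g x / f x))"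
    unfolding KL_def expfam_dist_def f_def[symmetric] g_def[symmetric]
    using fnn gnn ac by (subst density_density_divide) auto
  also have "\<dots> = (\<integral>x. (g x / f x) * log (exp 1) (g x / f x) \<partial>density nu f)"
    using fnn gnn by (intro F.KL_density) (auto simp: AE_density)
  also have "\<dots> = (\<integral>x. f x * ((g x / f x) * log (exp 1) (g x / f x)) \<partial>nu)"
    using fnn by (subst integral_density) auto
  also have "\<dots> = (\<integral>x. g x * ((ln (Zf \<theta>0) - ln (Zf \<theta>)) + inner (\<theta> - \<theta>0) (T x)) \<partial>nu)"
  proof (rule Bochner_Integration.integral_cong[OF refl])
    fix x assume x: "x \<in> space nu"
    show "f x * ((g x / f x) * log (exp 1) (g x / f x)) = g x * ((ln (Zf \<theta>0) - ln (Zf \<theta>)) + inner (\<theta> - \<theta>0) (T x))"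
    proof (cases "h x = 0")
      case True then show ?thesis unfolding f_def g_def by (simp add: dens_eq[OF th] dens_eq[OF th0])
    next
      case False
      then have hx: "h x > 0" using h_nonneg x by (simp add: order_less_le)
      have Z1: "Zf \<theta> > 0" and Z0: "Zf \<theta>0 > 0" using Z_pos th th0 by auto
      have q: "g x / f x = exp (inner (\<theta> - \<theta>0) (T x)) * (Zf \<theta>0 / Zf \<theta>)"
        unfolding f_def g_def using hx Z1 Z0
        by (simp add: dens_eq[OF th] dens_eq[OF th0] inner_diff_left exp_diff field_simps)
      have l: "log (exp 1) (g x / f x) = inner (\<theta> - \<theta>0) (T x) + (ln (Zf \<theta>0) - ln (Zf \<theta>))"
        unfolding q log_ln[symmetric] using Z1 Z0 by (simp add: ln_mult ln_div)
      have fpos: "f x > 0" unfolding f_def using hx Z0 by (simp add: dens_eq[OF th0])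
      show ?thesis unfolding l using fpos by (simp add: field_simps)
    qed
  qed
  also have "\<dots> = (\<integral>x. (ln (Zf \<theta>0) - ln (Zf \<theta>)) + inner (\<theta> - \<theta>0) (T x) \<partial>density nu g)"
    using gnn by (subst integral_density) auto
  also have "\<dots> = (ln (Zf \<theta>0) - ln (Zf \<theta>)) + Ef \<theta> (\<theta> - \<theta>0)"
    unfolding g_def expfam_dist_def[symmetric] by (rule int_dist_const_lin[OF th])
  finally show ?thesis by simp
qed


lemma Theta_convex: "convex (expfam_Theta nu h T)"
  unfolding convex_alt
proof (intro ballI allI impI)
  fix x y :: 'p and u :: real
  assume x: "x \<in> expfam_Theta nu h T" and y: "y \<in> expfam_Theta nu h T" and u: "0 \<le> u \<and> u \<le> 1"
  have int: "integrable nu (\<lambda>z. (1 - u) * (h z * exp (inner x (T z))) + u * (h z * exp (inner y (T z))))"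
    using x y by (auto simp: Theta_iff)
  show "(1 - u) *\<^sub>R x + u *\<^sub>R y \<in> expfam_Theta nu h T"
    unfolding Theta_iff
  proof (rule Bochner_Integration.integrable_bound[OF int])
    show "AE z in nu. norm (h z * exp (inner ((1 - u) *\<^sub>R x + u *\<^sub>R y) (T z)))
        \<le> norm ((1 - u) * (h z * exp (inner x (T z))) + u * (h z * exp (inner y (T z))))"
    proof (rule AE_I2)
      fix z assume z: "z \<in> space nu"
      have hz: "0 \<le> h z" using z h_nonneg by auto
      have c: "exp ((1 - u) *\<^sub>R inner x (T z) + u *\<^sub>R inner y (T z)) \<le> (1 - u) * exp (inner x (T z)) + u * exp (inner y (T z))"
        using u by (intro convex_onD[OF exp_convex]) auto
      have "norm (h z * exp (inner ((1 - u) *\<^sub>R x + u *\<^sub>R y) (T z)))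
          = h z * exp ((1 - u) *\<^sub>R inner x (T z) + u *\<^sub>R inner y (T z))"
        using hz by (simp add: inner_add_left)
      also have "\<dots> \<le> h z * ((1 - u) * exp (inner x (T z)) + u * exp (inner y (T z)))"
        using c hz by (rule mult_left_mono)
      also have "\<dots> = (1 - u) * (h z * exp (inner x (T z))) + u * (h z * exp (inner y (T z)))"
        by (simp add: algebra_simps)
      also have "\<dots> \<le> norm \<dots>" unfolding real_norm_def by (rule abs_ge_self)
      finally show "norm (h z * exp (inner ((1 - u) *\<^sub>R x + u *\<^sub>R y) (T z)))
        \<le> norm ((1 - u) * (h z * exp (inner x (T z))) + u * (h z * exp (inner y (T z))))" .
    qed
  qed measurable
qed

lemma Ef_zero: "Ef \<theta> 0 = 0"
  using Ef_scale[of \<theta> 0 0] by simp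

lemma lnZ_convex:
  assumes x: "x \<in> expfam_Theta nu h T" and y: "y \<in> expfam_Theta nu h T" and u: "0 \<le> u" "u \<le> 1"
  shows "ln (Zf ((1 - u) *\<^sub>R x + u *\<^sub>R y)) \<le> (1 - u) * ln (Zf x) + u * ln (Zf y)"
proof -
  define z where "z = (1 - u) *\<^sub>R x + u *\<^sub>R y"
  have z: "z \<in> expfam_Theta nu h T" unfolding z_def using Theta_convex x y u
    by (simp add: convex_alt)
  have 1: "ln (Zf z) + Ef z (x - z) \<le> ln (Zf x)" by (rule support[OF z x])
  have 2: "ln (Zf z) + Ef z (y - z) \<le> ln (Zf y)" by (rule support[OF z y])
  have "(1 - u) *\<^sub>R (x - z) + u *\<^sub>R (y - z) = 0" unfolding z_def by (simp add: algebra_simps)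
  then have "Ef z ((1 - u) *\<^sub>R (x - z) + u *\<^sub>R (y - z)) = 0" by (simp add: Ef_zero)
  then have 3: "(1 - u) * Ef z (x - z) + u * Ef z (y - z) = 0" by (simp add: Ef_add[OF z] Ef_scale)
  have "(1 - u) * (ln (Zf z) + Ef z (x - z)) + u * (ln (Zf z) + Ef z (y - z)) \<le> (1 - u) * ln (Zf x) + u * ln (Zf y)"
    using 1 2 u by (intro add_mono mult_left_mono) auto
  then show ?thesis using 3 unfolding z_def[symmetric] by (simp add: algebra_simps)
qed

lemma exp_between:
  fixes a t b \<alpha> \<beta> :: real
  assumes "a \<le> t" "t \<le> b"
  shows "exp (\<alpha> - t * \<beta>) \<le> exp (\<alpha> - a * \<beta>) + exp (\<alpha> - b * \<beta>)"
proof (cases "0 \<le> \<beta>")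
  case True
  then have "exp (\<alpha> - t * \<beta>) \<le> exp (\<alpha> - a * \<beta>)" using assms by (simp add: mult_right_mono)
  then show ?thesis by (smt (verit) exp_gt_zero)
next
  case False
  then have "exp (\<alpha> - t * \<beta>) \<le> exp (\<alpha> - b * \<beta>)" using assms
    by (auto intro!: mult_right_mono_neg)
  then show ?thesis by (smt (verit) exp_gt_zero)
qed

lemma line_cont:
  assumes t0: "\<theta>0 - t0 *\<^sub>R v \<in> expfam_Theta nu h T"
  shows "isCont (\<lambda>t. Zf (\<theta>0 - t *\<^sub>R v)) t0"
    and "isCont (\<lambda>t. \<integral>y. h y * exp (inner (\<theta>0 - t *\<^sub>R v) (T y)) * inner (- v) (T y) \<partial>nu) t0"
proof -
  have "open ((\<lambda>t. \<theta>0 - t *\<^sub>R v) -` expfam_Theta nu h T)"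
    by (intro continuous_open_vimage open_Theta allI) (auto intro!: continuous_intros)
  then obtain r where r: "r > 0" "ball t0 r \<subseteq> (\<lambda>t. \<theta>0 - t *\<^sub>R v) -` expfam_Theta nu h T"
    using t0 open_contains_ball by blast
  define e where "e = r / 3"
  have e: "e > 0" using r by (simp add: e_def)
  have inR: "\<theta>0 - t *\<^sub>R v \<in> expfam_Theta nu h T" if "\<bar>t - t0\<bar> < r" for t
  proof -
    have "t \<in> ball t0 r" using that by (simp add: dist_real_def abs_minus_commute)
    then show ?thesis using r(2) by blast
  qed
  let ?b = "\<lambda>t y. h y * exp (inner (\<theta>0 - t *\<^sub>R v) (T y))"
  have ib: "integrable nu (?b t)" if "\<bar>t - t0\<bar> < r" for t
    using inR[OF that] by (simp add: Theta_iff)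
  have bexp: "?b t y = h y * exp (inner \<theta>0 (T y) - t * inner v (T y))" for t y
    by (simp add: inner_diff_left)
  have btw: "?b t y \<le> ?b a y + ?b c y" if "a \<le> t" "t \<le> c" "y \<in> space nu" for a t c y
  proof -
    have "0 \<le> h y" using that h_nonneg by auto
    then have "h y * exp (inner \<theta>0 (T y) - t * inner v (T y))
      \<le> h y * (exp (inner \<theta>0 (T y) - a * inner v (T y)) + exp (inner \<theta>0 (T y) - c * inner v (T y)))"
      by (rule mult_left_mono[OF exp_between[OF that(1,2)]])
    then show ?thesis unfolding bexp by (simp add: algebra_simps)
  qed
  have bnn: "0 \<le> ?b t y" if "y \<in> space nu" for t y using that h_nonneg by auto
  show "isCont (\<lambda>t. Zf (\<theta>0 - t *\<^sub>R v)) t0"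
    unfolding Zf_def
  proof (rule isCont_integral_dom[OF e, where w="\<lambda>y. ?b (t0 - e) y + ?b (t0 + e) y"])
    show "integrable nu (\<lambda>y. ?b (t0 - e) y + ?b (t0 + e) y)"
      using e_def r by (intro Bochner_Integration.integrable_add ib) auto
    show "\<bar>?b t y\<bar> \<le> ?b (t0 - e) y + ?b (t0 + e) y" if "\<bar>t - t0\<bar> < e" "y \<in> space nu" for t y
      using btw[of "t0 - e" t "t0 + e" y] bnn[of y t] that by auto
  qed (auto intro!: continuous_intros)
  show "isCont (\<lambda>t. \<integral>y. h y * exp (inner (\<theta>0 - t *\<^sub>R v) (T y)) * inner (- v) (T y) \<partial>nu) t0"
  proof (rule isCont_integral_dom[OF e, where w="\<lambda>y. 2 * (?b (t0 - 2*e) y + ?b (t0 + 2*e) y) / e"])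
    show "integrable nu (\<lambda>y. 2 * (?b (t0 - 2*e) y + ?b (t0 + 2*e) y) / e)"
      using e_def r by (intro integrable_divide_zero integrable_mult_right Bochner_Integration.integrable_add ib) auto
    show "\<bar>?b t y * inner (- v) (T y)\<bar> \<le> 2 * (?b (t0 - 2*e) y + ?b (t0 + 2*e) y) / e"
      if t: "\<bar>t - t0\<bar> < e" and y: "y \<in> space nu" for t y
    proof -
      let ?x = "inner v (T y)"
      have hy: "0 \<le> h y" using y h_nonneg by auto
      have e1: "?b t y * exp (e * ?x) = ?b (t - e) y"
      proof -
        have "?b t y * exp (e * ?x) = h y * exp (inner \<theta>0 (T y) - t * ?x + e * ?x)"
          by (simp add: bexp exp_add mult.assoc)
        also have "\<dots> = ?b (t - e) y" by (simp add: bexp algebra_simps)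
        finally show ?thesis .
      qed
      have e2: "?b t y * exp (-(e * ?x)) = ?b (t + e) y"
      proof -
        have "?b t y * exp (-(e * ?x)) = h y * exp (inner \<theta>0 (T y) - t * ?x + (-(e * ?x)))"
          by (simp only: bexp mult.assoc exp_add)
        also have "\<dots> = ?b (t + e) y" by (simp add: bexp algebra_simps)
        finally show ?thesis .
      qed
      have "\<bar>?b t y * inner (- v) (T y)\<bar> = ?b t y * \<bar>?x\<bar>"
        using bnn[OF y] hy by (simp add: abs_mult)
      also have "\<dots> \<le> ?b t y * ((exp (e * ?x) + exp (-(e * ?x))) / e)"
        by (rule mult_left_mono[OF abs_le_exps[OF e] bnn[OF y]])
      also have "\<dots> = (?b (t - e) y + ?b (t + e) y) / e"
        unfolding e1[symmetric] e2[symmetric] by (simp add: algebra_simps add_divide_distrib)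
      also have "\<dots> \<le> ((?b (t0 - 2*e) y + ?b (t0 + 2*e) y) + (?b (t0 - 2*e) y + ?b (t0 + 2*e) y)) / e"
      proof -
        have "?b (t - e) y \<le> ?b (t0 - 2*e) y + ?b (t0 + 2*e) y" using t e y by (intro btw) auto
        moreover have "?b (t + e) y \<le> ?b (t0 - 2*e) y + ?b (t0 + 2*e) y" using t e y by (intro btw) auto
        ultimately show ?thesis using e by (intro divide_right_mono) auto
      qed
      also have "\<dots> = 2 * (?b (t0 - 2*e) y + ?b (t0 + 2*e) y) / e" by simp
      finally show ?thesis .
    qed
  qed (auto intro!: continuous_intros)
qed


lemma line_closure:
  assumes ts: "0 < ts"
    and below: "\<And>t. 0 \<le> t \<Longrightarrow> t < ts \<Longrightarrow> \<theta>0 - t *\<^sub>R v \<in> expfam_Theta nu h T \<and> ln (Zf (\<theta>0 - t *\<^sub>R v)) \<le> B"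
  shows "\<theta>0 - ts *\<^sub>R v \<in> expfam_Theta nu h T"
proof -
  define X where "X n = ts - ts / (real n + 2)" for n :: nat
  have X: "0 \<le> X n \<and> X n < ts" for n
    using ts unfolding X_def by (auto simp: field_simps)
  have Xlim: "X \<longlonglongrightarrow> ts"
  proof -
    have "(\<lambda>n. ts / (real n + 2)) \<longlonglongrightarrow> 0"
      by real_asymp
    then have "(\<lambda>n. ts - ts / (real n + 2)) \<longlonglongrightarrow> ts - 0" by (intro tendsto_intros)
    then show ?thesis unfolding X_def by simp
  qed
  let ?f = "\<lambda>n y. ennreal (h y * exp (inner (\<theta>0 - X n *\<^sub>R v) (T y)))"
  have "(\<integral>\<^sup>+ y. ennreal (h y * exp (inner (\<theta>0 - ts *\<^sub>R v) (T y))) \<partial>nu) = (\<integral>\<^sup>+ y. liminf (\<lambda>n. ?f n y) \<partial>nu)"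
  proof (rule nn_integral_cong)
    fix y
    have "(\<lambda>n. h y * exp (inner (\<theta>0 - X n *\<^sub>R v) (T y))) \<longlonglongrightarrow> h y * exp (inner (\<theta>0 - ts *\<^sub>R v) (T y))"
      by (intro tendsto_intros Xlim)
    then have "(\<lambda>n. ?f n y) \<longlonglongrightarrow> ennreal (h y * exp (inner (\<theta>0 - ts *\<^sub>R v) (T y)))"
      by (rule tendsto_ennrealI)
    then show "ennreal (h y * exp (inner (\<theta>0 - ts *\<^sub>R v) (T y))) = liminf (\<lambda>n. ?f n y)"
      by (simp add: lim_imp_Liminf)
  qed
  also have "\<dots> \<le> liminf (\<lambda>n. \<integral>\<^sup>+ y. ?f n y \<partial>nu)"
    by (rule nn_integral_liminf) measurable
  also have "\<dots> \<le> limsup (\<lambda>n. \<integral>\<^sup>+ y. ?f n y \<partial>nu)"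
    by (rule Liminf_le_Limsup) simp
  also have "\<dots> \<le> ennreal (exp B)"
  proof (rule Limsup_bounded, rule always_eventually, rule allI)
    fix n
    have th: "\<theta>0 - X n *\<^sub>R v \<in> expfam_Theta nu h T" using below X by blast
    have "(\<integral>\<^sup>+ y. ?f n y \<partial>nu) = ennreal (Zf (\<theta>0 - X n *\<^sub>R v))"
      unfolding Zf_def using th h_nonneg by (intro nn_integral_eq_integral) (auto simp: Theta_iff)
    also have "Zf (\<theta>0 - X n *\<^sub>R v) = exp (ln (Zf (\<theta>0 - X n *\<^sub>R v)))"
      using Z_pos[OF th] by simp
    also have "\<dots> \<le> exp B" using below X by blast
    finally show "(\<integral>\<^sup>+ y. ?f n y \<partial>nu) \<le> ennreal (exp B)" by (simp add: ennreal_leI)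
  qed
  finally show ?thesis unfolding expfam_Theta_def by (simp add: le_less_trans)
qed


lemma G_in:
  assumes th0: "\<theta>0 \<in> expfam_Theta nu h T" and v: "v \<in> expfam_Theta nu h T" and g: "0 < \<gamma>"
    and tg: "\<theta>0 - (1/\<gamma>) *\<^sub>R v \<in> expfam_Theta nu h T"
  shows "ereal \<gamma> * (ereal \<rho> - expfam_Psi nu h T \<theta>0)
           + ereal \<gamma> * expfam_Psi nu h T (\<theta>0 - (1 / \<gamma>) *\<^sub>R v)
           + expfam_Psi nu h T v
       = ereal (\<gamma> * (\<rho> - ln (Zf \<theta>0)) + \<gamma> * ln (Zf (\<theta>0 - (1/\<gamma>) *\<^sub>R v)) + ln (Zf v))"
  using th0 v tg by (simp add: Psi_eq)

lemma G_out:
  assumes th0: "\<theta>0 \<in> expfam_Theta nu h T" and v: "v \<in> expfam_Theta nu h T" and g: "0 < \<gamma>"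
    and tg: "\<theta>0 - (1/\<gamma>) *\<^sub>R v \<notin> expfam_Theta nu h T"
  shows "ereal \<gamma> * (ereal \<rho> - expfam_Psi nu h T \<theta>0)
           + ereal \<gamma> * expfam_Psi nu h T (\<theta>0 - (1 / \<gamma>) *\<^sub>R v)
           + expfam_Psi nu h T v = \<infinity>"
  using th0 v tg g by (simp add: Psi_eq expfam_Psi_def)

lemma loss_int:
  assumes th: "\<theta> \<in> expfam_Theta nu h T"
  shows "(\<integral>y. p - inner (T y) v \<partial>expfam_dist nu h T \<theta>) = p + Ef \<theta> (- v)"
proof -
  have "(\<integral>y. p - inner (T y) v \<partial>expfam_dist nu h T \<theta>) = (\<integral>y. p + inner (- v) (T y) \<partial>expfam_dist nu h T \<theta>)"
    by (simp add: inner_commute)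
  also have "\<dots> = p + Ef \<theta> (- v)" by (rule int_dist_const_lin[OF th])
  finally show ?thesis .
qed

lemma upper_part:
  assumes th0: "\<theta>0 \<in> expfam_Theta nu h T" and v: "v \<in> expfam_Theta nu h T" and g: "0 < \<gamma>"
    and th: "\<theta> \<in> expfam_Theta nu h T"
    and kl: "KL (expfam_dist nu h T \<theta>) (expfam_dist nu h T \<theta>0) \<le> \<rho>"
  shows "ereal (ln (Zf v) + Ef \<theta> (- v)) \<le> ereal \<gamma> * (ereal \<rho> - expfam_Psi nu h T \<theta>0)
           + ereal \<gamma> * expfam_Psi nu h T (\<theta>0 - (1 / \<gamma>) *\<^sub>R v)
           + expfam_Psi nu h T v"
proof (cases "\<theta>0 - (1/\<gamma>) *\<^sub>R v \<in> expfam_Theta nu h T")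
  case False then show ?thesis by (subst G_out[OF th0 v g False]) simp
next
  case True
  define tg where "tg = \<theta>0 - (1/\<gamma>) *\<^sub>R v"
  have tgT: "tg \<in> expfam_Theta nu h T" using True tg_def by simp
  define E1 where "E1 = Ef \<theta> (\<theta> - \<theta>0)"
  define Ev where "Ev = Ef \<theta> v"
  have sup: "ln (Zf \<theta>) + Ef \<theta> (tg - \<theta>) \<le> ln (Zf tg)" by (rule support[OF th tgT])
  have "tg - \<theta> = - (\<theta> - \<theta>0) - (1/\<gamma>) *\<^sub>R v" unfolding tg_def by (simp add: algebra_simps)
  then have "Ef \<theta> (tg - \<theta>) = - E1 - (1/\<gamma>) * Ev"
    unfolding E1_def Ev_def by (simp add: Ef_diff[OF th] Ef_minus Ef_scale)
  with sup have s2: "ln (Zf \<theta>) - E1 - (1/\<gamma>) * Ev \<le> ln (Zf tg)" by simp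
  have k2: "E1 - ln (Zf \<theta>) + ln (Zf \<theta>0) \<le> \<rho>" using kl KL_eq[OF th th0] E1_def by simp
  have "\<gamma> * (ln (Zf \<theta>) - E1 - (1/\<gamma>) * Ev) \<le> \<gamma> * ln (Zf tg)" using s2 g by (intro mult_left_mono) auto
  moreover have "\<gamma> * (E1 - ln (Zf \<theta>)) \<le> \<gamma> * (\<rho> - ln (Zf \<theta>0))" using k2 g by (intro mult_left_mono) auto
  ultimately have "- Ev \<le> \<gamma> * (\<rho> - ln (Zf \<theta>0)) + \<gamma> * ln (Zf tg)"
    using g by (simp add: algebra_simps)
  then have "ln (Zf v) + Ef \<theta> (- v) \<le> \<gamma> * (\<rho> - ln (Zf \<theta>0)) + \<gamma> * ln (Zf tg) + ln (Zf v)"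
    by (simp add: Ef_minus Ev_def)
  then show ?thesis using G_in[OF th0 v g True] tg_def by simp
qed


lemma main_ineq:
  assumes th0: "\<theta>0 \<in> expfam_Theta nu h T" and v: "v \<in> expfam_Theta nu h T" and rho: "0 \<le> \<rho>"
  defines "G \<equiv> (\<lambda>\<gamma>::real. ereal \<gamma> * (ereal \<rho> - expfam_Psi nu h T \<theta>0)
           + ereal \<gamma> * expfam_Psi nu h T (\<theta>0 - (1 / \<gamma>) *\<^sub>R v)
           + expfam_Psi nu h T v)"
  shows "(SUP Q \<in> cond_ambiguity_set nu h T \<theta>0 \<rho>.
               ereal (\<integral>y. ln (Zf v) - inner (T y) v \<partial>Q)) = (INF \<gamma> \<in> {0<..}. G \<gamma>)"
    (is "?L = ?R")
proof (rule antisym)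
  show "?L \<le> ?R"
  proof (rule SUP_least, rule INF_greatest)
    fix Q \<gamma> assume Q: "Q \<in> cond_ambiguity_set nu h T \<theta>0 \<rho>" and g: "\<gamma> \<in> {0::real<..}"
    from Q obtain \<theta> where Qd: "Q = expfam_dist nu h T \<theta>" and th: "\<theta> \<in> expfam_Theta nu h T"
      and kl: "KL (expfam_dist nu h T \<theta>) (expfam_dist nu h T \<theta>0) \<le> \<rho>"
      unfolding cond_ambiguity_set_def by blast
    show "ereal (\<integral>y. ln (Zf v) - inner (T y) v \<partial>Q) \<le> G \<gamma>"
      unfolding Qd loss_int[OF th] G_def using upper_part[OF th0 v _ th kl] g by simp
  qed
next
  define R where "R = {t::real. \<theta>0 - t *\<^sub>R v \<in> expfam_Theta nu h T}"
  define K where "K t = ln (Zf (\<theta>0 - t *\<^sub>R v)) - ln (Zf \<theta>0)" for t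
  define m where "m t = Ef (\<theta>0 - t *\<^sub>R v) (- v)" for t
  show "?R \<le> ?L"
  proof (rule oneD[where R=R and K=K and m=m and \<rho>=\<rho> and p="ln (Zf v)"])
    have "open ((\<lambda>t. \<theta>0 - t *\<^sub>R v) -` expfam_Theta nu h T)"
      by (intro continuous_open_vimage open_Theta allI) (auto intro!: continuous_intros)
    then show "open R" unfolding R_def vimage_def by simp
    show "convex R" unfolding R_def convex_alt
    proof (intro ballI allI impI, simp)
      fix a b u :: real
      assume a: "\<theta>0 - a *\<^sub>R v \<in> expfam_Theta nu h T" and b: "\<theta>0 - b *\<^sub>R v \<in> expfam_Theta nu h T"
        and u: "0 \<le> u \<and> u \<le> 1"
      have "(1 - u) *\<^sub>R (\<theta>0 - a *\<^sub>R v) + u *\<^sub>R (\<theta>0 - b *\<^sub>R v) \<in> expfam_Theta nu h T"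
        using Theta_convex a b u by (simp add: convex_alt)
      moreover have "(1 - u) *\<^sub>R (\<theta>0 - a *\<^sub>R v) + u *\<^sub>R (\<theta>0 - b *\<^sub>R v) = \<theta>0 - ((1 - u) * a + u * b) *\<^sub>R v"
        by (simp add: algebra_simps)
      ultimately show "\<theta>0 - ((1 - u) * a + u * b) *\<^sub>R v \<in> expfam_Theta nu h T" by simp
    qed
    show "0 \<in> R" unfolding R_def using th0 by simp
    show "K 0 = 0" unfolding K_def by simp
    show "K t + (s - t) * m t \<le> K s" if "s \<in> R" "t \<in> R" for s t
    proof -
      have s: "\<theta>0 - s *\<^sub>R v \<in> expfam_Theta nu h T" and t: "\<theta>0 - t *\<^sub>R v \<in> expfam_Theta nu h T"
        using that R_def by auto
      have "(\<theta>0 - s *\<^sub>R v) - (\<theta>0 - t *\<^sub>R v) = (s - t) *\<^sub>R (- v)" by (simp add: algebra_simps)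
      then have "Ef (\<theta>0 - t *\<^sub>R v) ((\<theta>0 - s *\<^sub>R v) - (\<theta>0 - t *\<^sub>R v)) = (s - t) * m t"
        unfolding m_def by (simp only: Ef_scale)
      then show ?thesis using support[OF t s] unfolding K_def by simp
    qed
    have Zc: "isCont (\<lambda>t. Zf (\<theta>0 - t *\<^sub>R v)) t" if "t \<in> R" for t
      using line_cont(1) that R_def by auto
    have Nc: "isCont (\<lambda>t. \<integral>y. h y * exp (inner (\<theta>0 - t *\<^sub>R v) (T y)) * inner (- v) (T y) \<partial>nu) t" if "t \<in> R" for t
      using line_cont(2) that R_def by auto
    have Zp: "Zf (\<theta>0 - t *\<^sub>R v) > 0" if "t \<in> R" for t
      using Z_pos that R_def by auto
    show "continuous_on R m"
    proof (intro continuous_at_imp_continuous_on ballI)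
      fix t assume t: "t \<in> R"
      have "isCont (\<lambda>t. (\<integral>y. h y * exp (inner (\<theta>0 - t *\<^sub>R v) (T y)) * inner (- v) (T y) \<partial>nu) / Zf (\<theta>0 - t *\<^sub>R v)) t"
        using Zc[OF t] Nc[OF t] Zp[OF t] by (intro continuous_intros) auto
      then show "isCont m t" unfolding m_def Ef_def .
    qed
    show "continuous_on R K"
    proof -
      have "continuous_on R (\<lambda>t. Zf (\<theta>0 - t *\<^sub>R v))"
        using Zc by (intro continuous_at_imp_continuous_on) auto
      then have "continuous_on R (\<lambda>t. ln (Zf (\<theta>0 - t *\<^sub>R v)))"
        using Zp by (intro continuous_on_ln) (auto, metis less_irrefl)
      then show ?thesis unfolding K_def by (rule continuous_on_diff[OF _ continuous_on_const])
    qed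
    show "t' \<in> R" if t': "0 < t'" and bd: "\<And>t. 0 \<le> t \<Longrightarrow> t < t' \<Longrightarrow> t \<in> R \<and> K t \<le> B" for t' B
    proof -
      have "\<theta>0 - t' *\<^sub>R v \<in> expfam_Theta nu h T"
        by (rule line_closure[OF t', where B="B + ln (Zf \<theta>0)"]) (use bd in \<open>force simp: R_def K_def\<close>)
      then show ?thesis unfolding R_def by simp
    qed
    show "0 \<le> \<rho>" by (rule rho)
    show "ereal (ln (Zf v) + m t) \<le> ?L" if t: "t \<in> R" "0 \<le> t" and F: "t * m t - K t \<le> \<rho>" for t
    proof -
      have tT: "\<theta>0 - t *\<^sub>R v \<in> expfam_Theta nu h T" using t R_def by auto
      have "(\<theta>0 - t *\<^sub>R v) - \<theta>0 = t *\<^sub>R (- v)" by simp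
      then have "KL (expfam_dist nu h T (\<theta>0 - t *\<^sub>R v)) (expfam_dist nu h T \<theta>0) = t * m t - K t"
        unfolding KL_eq[OF tT th0] K_def m_def using Ef_scale[of "\<theta>0 - t *\<^sub>R v" t "- v"] by simp
      then have klr: "KL (expfam_dist nu h T (\<theta>0 - t *\<^sub>R v)) (expfam_dist nu h T \<theta>0) \<le> \<rho>"
        using F by simp
      have "expfam_dist nu h T (\<theta>0 - t *\<^sub>R v) \<in> cond_ambiguity_set nu h T \<theta>0 \<rho>"
        unfolding cond_ambiguity_set_def
        by (rule CollectI, rule exI[of _ "\<theta>0 - t *\<^sub>R v"]) (simp add: tT klr)
      moreover have "ereal (\<integral>y. ln (Zf v) - inner (T y) v \<partial>expfam_dist nu h T (\<theta>0 - t *\<^sub>R v)) = ereal (ln (Zf v) + m t)"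
        unfolding loss_int[OF tT] m_def ..
      ultimately show ?thesis by (metis SUP_upper)
    qed
    show "?R \<le> ereal (\<gamma> * \<rho> + \<gamma> * K (1/\<gamma>) + ln (Zf v))" if g: "0 < \<gamma>" "1/\<gamma> \<in> R" for \<gamma>
    proof -
      have tg: "\<theta>0 - (1/\<gamma>) *\<^sub>R v \<in> expfam_Theta nu h T" using g R_def by auto
      have "?R \<le> G \<gamma>" using g by (intro INF_lower) auto
      also have "G \<gamma> = ereal (\<gamma> * \<rho> + \<gamma> * K (1/\<gamma>) + ln (Zf v))"
        unfolding G_def G_in[OF th0 v g(1) tg] K_def by (simp add: algebra_simps)
      finally show ?thesis .
    qed
  qed
qed


lemma G_convex:
  fixes \<rho> :: real
  assumes th0: "\<theta>0 \<in> expfam_Theta nu h T" and v: "v \<in> expfam_Theta nu h T"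
  defines "G \<equiv> (\<lambda>\<gamma>::real. ereal \<gamma> * (ereal \<rho> - expfam_Psi nu h T \<theta>0)
           + ereal \<gamma> * expfam_Psi nu h T (\<theta>0 - (1 / \<gamma>) *\<^sub>R v)
           + expfam_Psi nu h T v)"
  shows "convex_on_ereal {0<..} G"
  unfolding convex_on_ereal_def
proof (intro conjI ballI)
  show "convex {0::real<..}" by (rule convex_real_interval)
  fix x y t :: real assume x: "x \<in> {0<..}" and y: "y \<in> {0<..}" and t: "t \<in> {0..1}"
  have xp: "x > 0" and yp: "y > 0" and t0: "0 \<le> t" and t1: "t \<le> 1" using x y t by auto
  define z where "z = (1 - t) * x + t * y"
  have zp: "z > 0"
  proof (cases "t = 0")
    case True then show ?thesis using xp z_def by simp
  next
    case False then have "t > 0" using t0 by simp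
    then have "t * y > 0" using yp by simp
    moreover have "(1 - t) * x \<ge> 0" using t1 xp by simp
    ultimately show ?thesis unfolding z_def by linarith
  qed
  have Gfin: "G g \<noteq> - \<infinity>" if "g > 0" for g
    by (cases "\<theta>0 - (1/g) *\<^sub>R v \<in> expfam_Theta nu h T")
       (simp_all add: G_def G_in[OF th0 v that] G_out[OF th0 v that])
  show "G ((1 - t) * x + t * y) \<le> ereal (1 - t) * G x + ereal t * G y"
  proof (cases "t = 0 \<or> t = 1")
    case True then show ?thesis
    proof
      assume "t = 0" then show ?thesis by (simp add: zero_ereal_def[symmetric])
    next
      assume "t = 1" then show ?thesis by (simp add: zero_ereal_def[symmetric])
    qed
  next
    case False
    then have tp: "0 < t" "t < 1" using t0 t1 by auto
    show ?thesis
    proof (cases "\<theta>0 - (1/x) *\<^sub>R v \<in> expfam_Theta nu h T \<and> \<theta>0 - (1/y) *\<^sub>R v \<in> expfam_Theta nu h T")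
      case False
      then consider "\<theta>0 - (1/x) *\<^sub>R v \<notin> expfam_Theta nu h T" | "\<theta>0 - (1/y) *\<^sub>R v \<notin> expfam_Theta nu h T" by blast
      then have "ereal (1 - t) * G x + ereal t * G y = \<infinity>"
      proof cases
        case 1
        have "G x = \<infinity>" unfolding G_def by (rule G_out[OF th0 v xp 1])
        then show ?thesis using tp Gfin[OF yp] by simp
      next
        case 2
        have "G y = \<infinity>" unfolding G_def by (rule G_out[OF th0 v yp 2])
        then show ?thesis using tp Gfin[OF xp] by simp
      qed
      then show ?thesis by (metis ereal_less_eq(1))
    next
      case True
      then have ax: "\<theta>0 - (1/x) *\<^sub>R v \<in> expfam_Theta nu h T" and ay: "\<theta>0 - (1/y) *\<^sub>R v \<in> expfam_Theta nu h T"
        by auto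
      define u where "u = t * y / z"
      have "(1 - t) * x \<ge> 0" using tp xp by simp
      then have tyz: "t * y \<le> z" unfolding z_def by linarith
      have u0: "0 \<le> u" unfolding u_def using zp tp yp by simp
      have u1: "u \<le> 1" unfolding u_def using zp tyz by simp
      have u1': "1 - u = (1 - t) * x / z" unfolding u_def using zp z_def by (simp add: field_simps)
      have c1: "(1 - u) * (1/x) = (1 - t) / z" unfolding u1' using xp by simp
      have c2: "u * (1/y) = t / z" unfolding u_def using yp by simp
      have coef: "(1 - u) * (1/x) + u * (1/y) = 1/z"
        unfolding c1 c2 by (simp add: add_divide_distrib[symmetric])
      have vec: "(1 - u) *\<^sub>R (\<theta>0 - (1/x) *\<^sub>R v) + u *\<^sub>R (\<theta>0 - (1/y) *\<^sub>R v) = \<theta>0 - (1/z) *\<^sub>R v"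
      proof -
        have "(1 - u) *\<^sub>R (\<theta>0 - (1/x) *\<^sub>R v) + u *\<^sub>R (\<theta>0 - (1/y) *\<^sub>R v)
            = \<theta>0 - ((1 - u) * (1/x) + u * (1/y)) *\<^sub>R v"
          by (simp add: algebra_simps)
        then show ?thesis unfolding coef .
      qed
      have az: "\<theta>0 - (1/z) *\<^sub>R v \<in> expfam_Theta nu h T"
        using Theta_convex ax ay u0 u1 vec by (metis convex_alt)
      have lc: "ln (Zf (\<theta>0 - (1/z) *\<^sub>R v)) \<le> (1 - u) * ln (Zf (\<theta>0 - (1/x) *\<^sub>R v)) + u * ln (Zf (\<theta>0 - (1/y) *\<^sub>R v))"
        using lnZ_convex[OF ax ay u0 u1] vec by simp
      have "z * ln (Zf (\<theta>0 - (1/z) *\<^sub>R v)) \<le> z * ((1 - u) * ln (Zf (\<theta>0 - (1/x) *\<^sub>R v)) + u * ln (Zf (\<theta>0 - (1/y) *\<^sub>R v)))"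
        using lc zp by (intro mult_left_mono) auto
      also have "\<dots> = (1 - t) * (x * ln (Zf (\<theta>0 - (1/x) *\<^sub>R v))) + t * (y * ln (Zf (\<theta>0 - (1/y) *\<^sub>R v)))"
        unfolding u1' unfolding u_def using zp by (simp add: field_simps)
      finally have key: "z * ln (Zf (\<theta>0 - (1/z) *\<^sub>R v)) \<le> (1 - t) * (x * ln (Zf (\<theta>0 - (1/x) *\<^sub>R v))) + t * (y * ln (Zf (\<theta>0 - (1/y) *\<^sub>R v)))" .
      have "G z = ereal (z * (\<rho> - ln (Zf \<theta>0)) + z * ln (Zf (\<theta>0 - (1/z) *\<^sub>R v)) + ln (Zf v))"
        unfolding G_def by (rule G_in[OF th0 v zp az])
      also have "\<dots> \<le> ereal ((1 - t) * (x * (\<rho> - ln (Zf \<theta>0)) + x * ln (Zf (\<theta>0 - (1/x) *\<^sub>R v)) + ln (Zf v))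
                         + t * (y * (\<rho> - ln (Zf \<theta>0)) + y * ln (Zf (\<theta>0 - (1/y) *\<^sub>R v)) + ln (Zf v)))"
        using key unfolding z_def by (simp add: algebra_simps)
      also have "\<dots> = ereal (1 - t) * G x + ereal t * G y"
        unfolding G_def G_in[OF th0 v xp ax] G_in[OF th0 v yp ay] by simp
      finally show ?thesis unfolding z_def .
    qed
  qed
qed


lemma final_ctx:
  fixes \<rho> :: real
  assumes th0: "\<theta>0 \<in> expfam_Theta nu h T" and v: "v \<in> expfam_Theta nu h T" and rho: "0 \<le> \<rho>"
  shows "let G = (\<lambda>\<gamma>::real.
             ereal \<gamma> * (ereal \<rho> - expfam_Psi nu h T \<theta>0)
           + ereal \<gamma> * expfam_Psi nu h T (\<theta>0 - (1 / \<gamma>) *\<^sub>R v)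
           + expfam_Psi nu h T v)
         in (SUP Q \<in> cond_ambiguity_set nu h T \<theta>0 \<rho>.
               ereal (\<integral>y. real_of_ereal (expfam_Psi nu h T v) - inner (T y) v \<partial>Q))
            = (INF \<gamma> \<in> {0<..}. G \<gamma>)
          \<and> convex_on_ereal {0<..} G"
  unfolding Let_def using main_ineq[OF th0 v rho] G_convex[OF th0 v] Psi_eq[OF v] by simp

end

theorem proposition3p2:
  fixes nu :: "'y::euclidean_space measure"
    and h :: "'y \<Rightarrow> real"
    and T :: "'y \<Rightarrow> 'p::euclidean_space"
    and lam :: "'w::euclidean_space \<Rightarrow> 'x::euclidean_space \<Rightarrow> 'p"
    and W :: "'w set" and X :: "'x set"
    and xhat :: 'x and w :: 'w and thetahat :: 'p and rho :: real
  assumes h_meas: "h \<in> borel_measurable nu"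
    and h_nonneg: "\<forall>y\<in>space nu. 0 \<le> h y"
    and T_meas: "T \<in> borel_measurable nu"
    and regular: "expfam_regular nu h T"
    and lam_range: "\<forall>w'\<in>W. \<forall>x\<in>X. lam w' x \<in> expfam_Theta nu h T"
    and lam_cont: "continuous_on (W \<times> X) (\<lambda>(w', x). lam w' x)"
    and xhat: "xhat \<in> X" and w: "w \<in> W"
    and thetahat: "thetahat \<in> expfam_Theta nu h T"
    and rho: "0 \<le> rho"
  shows "let G = (\<lambda>\<gamma>::real.
             ereal \<gamma> * (ereal rho - expfam_Psi nu h T thetahat)
           + ereal \<gamma> * expfam_Psi nu h T (thetahat - (1 / \<gamma>) *\<^sub>R lam w xhat)
           + expfam_Psi nu h T (lam w xhat))
         in (SUP Q \<in> cond_ambiguity_set nu h T thetahat rho.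
               ereal (\<integral>y. expfam_logloss nu h T lam xhat y w \<partial>Q))
            = (INF \<gamma> \<in> {0<..}. G \<gamma>)
          \<and> convex_on_ereal {0<..} G"
proof -
  have v: "lam w xhat \<in> expfam_Theta nu h T" using lam_range xhat w by blast
  show ?thesis
    unfolding expfam_logloss_def
    by (rule final_ctx[OF h_meas h_nonneg T_meas regular thetahat v rho])
qed

end
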